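(* Let $\Delta$ be the $d$-simplex, i.e., the simplicial complex with vertex set $[d+1]$ containing all subsets of $[d+1]$ as faces. Then there is a sequence of elementary $2$-collapses that starts with $\Delta$ and ends with the simplicial complex whose faces are the empty set and the singletons $\{i\}$, $i \in [d+1]$ (all vertices of $\Delta$ and no faces of higher dimension).
   Context: Elementary $2$-collapse: if ${\sf K}$ is a simplicial complex and $\sigma, \tau \in {\sf K}$ satisfy (i) $\dim \sigma \leq 1$, (ii) $\tau$ is an inclusion-maximal face of ${\sf K}$, (iii) $\sigma \subseteq \tau$, and (iv) $\tau$ is the only face of ${\sf K}$ satisfying (ii) and (iii), then ${\sf K}' := {\sf K} \setminus \{\eta \in {\sf K} : \sigma \subseteq \eta \subseteq \tau\}$ arises from ${\sf K}$ by an elementary $2$-collapse. *)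

theory Defs
  imports Main
begin

text \<open>A (finite abstract) simplicial complex is represented as a set of faces,
each face a finite set of vertices. dim sigma = card sigma - 1, so
"dim sigma \<le> 1" is "card sigma \<le> 2" for finite sigma.\<close>

definition inclusion_maximal :: "'a set set \<Rightarrow> 'a set \<Rightarrow> bool" where
  "inclusion_maximal K \<tau> \<longleftrightarrow> \<tau> \<in> K \<and> (\<forall>\<eta>\<in>K. \<tau> \<subseteq> \<eta> \<longrightarrow> \<eta> = \<tau>)"

definition elementary_2_collapse :: "'a set set \<Rightarrow> 'a set set \<Rightarrow> bool" where
  "elementary_2_collapse K K' \<longleftrightarrow>
     (\<exists>\<sigma> \<tau>. \<sigma> \<in> K \<and> \<tau> \<in> K \<and> finite \<sigma> \<and> card \<sigma> \<le> 2
        \<and> inclusion_maximal K \<tau> \<and> \<sigma> \<subseteq> \<tau>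
        \<and> (\<forall>\<tau>'. inclusion_maximal K \<tau>' \<and> \<sigma> \<subseteq> \<tau>' \<longrightarrow> \<tau>' = \<tau>)
        \<and> K' = K - {\<eta> \<in> K. \<sigma> \<subseteq> \<eta> \<and> \<eta> \<subseteq> \<tau>})"

definition simplex :: "nat \<Rightarrow> nat set set" where
  "simplex d = Pow {1..d+1}"

definition vertex_complex :: "nat \<Rightarrow> nat set set" where
  "vertex_complex d = insert {} ((\<lambda>i. {i}) ` {1..d+1})"

end

theory Submission
  imports Defs
begin

lemma d1:
  assumes aU: "a \<notin> U" and ca: "c \<noteq> a"
  and x: "x \<in> Pow U \<union> (\<lambda>s. {s}) ` S \<union> insert a ` Pow (W - {c})"
  shows "x \<in> (Pow U \<union> (\<lambda>s. {s}) ` S \<union> insert a ` Pow W) - {\<eta> \<in> (Pow U \<union> (\<lambda>s. {s}) ` S \<union> insert a ` Pow W). {a,c} \<subseteq> \<eta> \<and> \<eta> \<subseteq> insert a W}"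
proof -
  have inK: "x \<in> Pow U \<union> (\<lambda>s. {s}) ` S \<union> insert a ` Pow W" using x by blast
  have "\<not> {a,c} \<subseteq> x" using x
  proof (elim UnE)
    assume "x \<in> Pow U" thus ?thesis using aU by blast
  next
    assume "x \<in> (\<lambda>s. {s}) ` S" thus ?thesis using ca by blast
  next
    assume "x \<in> insert a ` Pow (W - {c})"
    then obtain z where "x = insert a z" "z \<subseteq> W - {c}" by blast
    thus ?thesis using ca by blast
  qed
  thus ?thesis using inK by blast
qed
lemma d2:
  assumes ca: "c \<noteq> a"
  and x: "x \<in> (Pow U \<union> (\<lambda>s. {s}) ` S \<union> insert a ` Pow W) - {\<eta> \<in> (Pow U \<union> (\<lambda>s. {s}) ` S \<union> insert a ` Pow W). {a,c} \<subseteq> \<eta> \<and> \<eta> \<subseteq> insert a W}"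
  shows "x \<in> Pow U \<union> (\<lambda>s. {s}) ` S \<union> insert a ` Pow (W - {c})"
proof -
  have inK: "x \<in> Pow U \<union> (\<lambda>s. {s}) ` S \<union> insert a ` Pow W"
   and nr: "\<not> ({a,c} \<subseteq> x \<and> x \<subseteq> insert a W)" using x by blast+
  show ?thesis using inK
  proof (elim UnE)
    assume "x \<in> insert a ` Pow W"
    then obtain z where z: "x = insert a z" "z \<subseteq> W" by blast
    have "c \<notin> z" using nr z by blast
    hence "z \<in> Pow (W - {c})" using z by blast
    thus ?thesis using z by blast
  qed blast+
qed

lemma step:
  assumes aU: "a \<notin> U" and WU: "W \<subseteq> U" and cW: "c \<in> W"
  shows "elementary_2_collapse (Pow U \<union> (\<lambda>s. {s}) ` S \<union> insert a ` Pow W)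
                               (Pow U \<union> (\<lambda>s. {s}) ` S \<union> insert a ` Pow (W - {c}))"
  unfolding elementary_2_collapse_def
proof (intro exI conjI)
  let ?K = "Pow U \<union> (\<lambda>s. {s}) ` S \<union> insert a ` Pow W"
  have ca: "c \<noteq> a" using aU WU cW by blast
  have "{c} \<in> Pow W" using cW by simp
  hence "insert a {c} \<in> insert a ` Pow W" by (rule imageI)
  thus "{a,c} \<in> ?K" by (rule UnI2)
  have "W \<in> Pow W" by simp
  hence iW: "insert a W \<in> insert a ` Pow W" by (rule imageI)
  thus "insert a W \<in> ?K" by (rule UnI2)
  show "finite {a,c}" by simp
  show "card {a,c} \<le> 2" by (simp add: card_insert_if)
  show "{a,c} \<subseteq> insert a W" using cW by blast
  have sub: "\<And>\<eta>. \<eta> \<in> ?K \<Longrightarrow> {a,c} \<subseteq> \<eta> \<Longrightarrow> \<eta> \<subseteq> insert a W"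
  proof -
    fix \<eta> assume e: "\<eta> \<in> ?K" "{a,c} \<subseteq> \<eta>"
    show "\<eta> \<subseteq> insert a W" using e(1)
    proof (elim UnE)
      assume "\<eta> \<in> Pow U" thus ?thesis using aU e(2) by blast
    next
      assume "\<eta> \<in> (\<lambda>s. {s}) ` S"
      then obtain s where "\<eta> = {s}" by (rule imageE)
      thus ?thesis using ca e(2) by blast
    next
      assume "\<eta> \<in> insert a ` Pow W"
      then obtain z where "\<eta> = insert a z" "z \<in> Pow W" by (rule imageE)
      thus ?thesis by blast
    qed
  qed
  show im: "inclusion_maximal ?K (insert a W)"
    unfolding inclusion_maximal_def
  proof (intro conjI ballI impI)
    show "insert a W \<in> ?K" using iW by (rule UnI2)
    fix \<eta> assume e: "\<eta> \<in> ?K" "insert a W \<subseteq> \<eta>"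
    have "{a,c} \<subseteq> \<eta>" using e(2) cW by blast
    hence "\<eta> \<subseteq> insert a W" by (rule sub[OF e(1)])
    thus "\<eta> = insert a W" using e(2) by (rule equalityI)
  qed
  show "\<forall>\<tau>'. inclusion_maximal ?K \<tau>' \<and> {a,c} \<subseteq> \<tau>' \<longrightarrow> \<tau>' = insert a W"
  proof (intro allI impI)
    fix t assume h: "inclusion_maximal ?K t \<and> {a,c} \<subseteq> t"
    have hm: "inclusion_maximal ?K t" using h by (rule conjunct1)
    have tK: "t \<in> ?K" using hm unfolding inclusion_maximal_def by (rule conjunct1)
    have tm: "\<forall>\<eta>\<in>?K. t \<subseteq> \<eta> \<longrightarrow> \<eta> = t" using hm unfolding inclusion_maximal_def by (rule conjunct2)
    have "{a,c} \<subseteq> t" using h by (rule conjunct2)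
    hence ts: "t \<subseteq> insert a W" by (rule sub[OF tK])
    have "insert a W \<in> ?K" using iW by (rule UnI2)
    with tm have "t \<subseteq> insert a W \<longrightarrow> insert a W = t" by (rule bspec)
    hence "insert a W = t" using ts by (rule mp)
    thus "t = insert a W" by simp
  qed
  show "Pow U \<union> (\<lambda>s. {s}) ` S \<union> insert a ` Pow (W - {c}) =
        ?K - {\<eta> \<in> ?K. {a,c} \<subseteq> \<eta> \<and> \<eta> \<subseteq> insert a W}"
  proof (rule set_eqI, rule iffI)
    fix x assume "x \<in> Pow U \<union> (\<lambda>s. {s}) ` S \<union> insert a ` Pow (W - {c})"
    thus "x \<in> ?K - {\<eta> \<in> ?K. {a,c} \<subseteq> \<eta> \<and> \<eta> \<subseteq> insert a W}"
      by (rule d1[OF aU ca])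
  next
    fix x assume "x \<in> ?K - {\<eta> \<in> ?K. {a,c} \<subseteq> \<eta> \<and> \<eta> \<subseteq> insert a W}"
    then show "x \<in> Pow U \<union> (\<lambda>s. {s}) ` S \<union> insert a ` Pow (W - {c})"
      by (rule d2[OF ca])
  qed
qed

lemma inner:
  assumes "finite W" "a \<notin> U" "W \<subseteq> U"
  shows "elementary_2_collapse\<^sup>*\<^sup>* (Pow U \<union> (\<lambda>s. {s}) ` S \<union> insert a ` Pow W)
                               (Pow U \<union> (\<lambda>s. {s}) ` S \<union> {{a}})"
  using assms
proof (induction W rule: finite_induct)
  case empty
  have "insert a ` Pow {} = {{a}}" by simp
  thus ?case by simp
next
  case (insert c W)
  have st: "elementary_2_collapse (Pow U \<union> (\<lambda>s. {s}) ` S \<union> insert a ` Pow (insert c W))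
          (Pow U \<union> (\<lambda>s. {s}) ` S \<union> insert a ` Pow (insert c W - {c}))"
    by (rule step) (use insert.prems in auto)
  have e: "insert c W - {c} = W" using insert.hyps by blast
  have ih: "elementary_2_collapse\<^sup>*\<^sup>* (Pow U \<union> (\<lambda>s. {s}) ` S \<union> insert a ` Pow W)
                               (Pow U \<union> (\<lambda>s. {s}) ` S \<union> {{a}})"
    using insert.prems by (intro insert.IH) auto
  show ?case using st ih unfolding e by (rule converse_rtranclp_into_rtranclp)
qed

lemma outer:
  assumes "finite U"
  shows "elementary_2_collapse\<^sup>*\<^sup>* (Pow U \<union> (\<lambda>s. {s}) ` S)
                               (insert {} ((\<lambda>s. {s}) ` (U \<union> S)))"
  using assms
proof (induction U arbitrary: S rule: finite_induct)
  case (empty S)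
  have "Pow {} \<union> (\<lambda>s. {s}) ` S = insert {} ((\<lambda>s. {s}) ` ({} \<union> S))" by simp
  thus ?case by simp
next
  case (insert a U S)
  have e: "Pow (insert a U) \<union> (\<lambda>s. {s}) ` S = Pow U \<union> (\<lambda>s. {s}) ` S \<union> insert a ` Pow U"
    by (auto simp: Pow_insert)
  have s1: "elementary_2_collapse\<^sup>*\<^sup>* (Pow (insert a U) \<union> (\<lambda>s. {s}) ` S)
          (Pow U \<union> (\<lambda>s. {s}) ` S \<union> {{a}})"
    unfolding e by (rule inner) (use insert.hyps in auto)
  have e2: "Pow U \<union> (\<lambda>s. {s}) ` S \<union> {{a}} = Pow U \<union> (\<lambda>s. {s}) ` (insert a S)" by auto
  have e3: "insert a U \<union> S = U \<union> insert a S" by auto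
  show ?case using s1 insert.IH[of "insert a S"] unfolding e2 e3 by (rule rtranclp_trans)
qed

theorem lemma5:
  fixes d :: nat
  shows "elementary_2_collapse\<^sup>*\<^sup>* (simplex d) (vertex_complex d)"
proof -
  have "elementary_2_collapse\<^sup>*\<^sup>* (Pow {1..d+1} \<union> (\<lambda>s. {s}) ` {})
          (insert {} ((\<lambda>s. {s}) ` ({1..d+1} \<union> {})))" by (rule outer) simp
  thus ?thesis unfolding simplex_def vertex_complex_def by simp
qed

end
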